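(* The $k$-linear category $k[\Delta_{a,\mathrm{inj}}]$ is free as a left and as a right $u_a(\Omega_a)$-module, where $u_a(\Omega_a)$ denotes the image of the $k$-linear functor $u_a\colon\Omega_a\to k[\Delta_{a,\mathrm{inj}}]$.
   Context: Let $k$ be a field. For a small category $\mathcal C$, $k[\mathcal C]$ is its $k$-linearization: same objects, $k[\mathcal C](x,y)$ the $k$-vector space with basis $\mathrm{Hom}_{\mathcal C}(x,y)$, composition extended bilinearly. $\Delta_{a,\mathrm{inj}}$ is the category with objects $[n]=\{0<1<\dots<n\}$ for $n\ge0$ and $[-1]=\varnothing$, and injective order-preserving maps as morphisms; for $0\le i\le n$ (and $n\ge 0$), $\delta^i\colon[n-1]\to[n]$ is the injective order-preserving map omitting $i$ (so $\delta^0\colon[-1]\to[0]$ is the empty map). $\Omega_a$ is the $k$-linear category with objects $[n]$, $n\ge -1$, generated by arrows $d_n\colon[n-1]\to[n]$ for $n\ge 0$ subject only to the relations $d_{n+1}d_n=0$ for $n\ge0$. The $k$-linear functor $u_a\colon\Omega_a\to k[\Delta_{a,\mathrm{inj}}]$ is the identity on objects and sends $d_n\mapsto\sum_{i=0}^n(-1)^i\delta^i$. *)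

theory Defs
  imports Main
begin

text \<open>Objects [n], n \<ge> -1, are encoded by their cardinality c = n+1 :: nat.
A morphism of Delta_{a,inj} is a triple (c, d, f) with source c, target d and
f an injective order-preserving map {0..<c} -> {0..<d} (extended by 0 outside).\<close>

type_synonym mor = "nat \<times> nat \<times> (nat \<Rightarrow> nat)"

definition src :: "mor \<Rightarrow> nat" where "src m = fst m"
definition tgt :: "mor \<Rightarrow> nat" where "tgt m = fst (snd m)"
definition fn :: "mor \<Rightarrow> (nat \<Rightarrow> nat)" where "fn m = snd (snd m)"

definition valid_mor :: "mor \<Rightarrow> bool" where
  "valid_mor m \<longleftrightarrow> strict_mono_on {..<src m} (fn m) \<and> fn m ` {..<src m} \<subseteq> {..<tgt m}
     \<and> (\<forall>i\<ge>src m. fn m i = 0)"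

text \<open>composition g \<circ> f (only meaningful when tgt f = src g)\<close>
definition mcomp :: "mor \<Rightarrow> mor \<Rightarrow> mor" where
  "mcomp g f = (src f, tgt g, \<lambda>i. if i < src f then fn g (fn f i) else 0)"

definition idm :: "nat \<Rightarrow> mor" where
  "idm c = (c, c, \<lambda>i. if i < c then i else 0)"

text \<open>delta^i : [c-1] -> [c] in cardinality terms c -> c+1, omitting i (i \<le> c)\<close>
definition delta :: "nat \<Rightarrow> nat \<Rightarrow> mor" where
  "delta c i = (c, Suc c, \<lambda>j. if j < c then (if j < i then j else Suc j) else 0)"

text \<open>Elements of the k-linearization: finitely supported k-valued functions on
morphisms; this is the direct sum of all hom spaces of k[Delta_{a,inj}].\<close>
definition kDelta :: "(mor \<Rightarrow> 'k::field) set" where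
  "kDelta = {\<phi>. finite {m. \<phi> m \<noteq> 0} \<and> (\<forall>m. \<phi> m \<noteq> 0 \<longrightarrow> valid_mor m)}"

definition basis_el :: "mor \<Rightarrow> (mor \<Rightarrow> 'k::field)" where
  "basis_el f = (\<lambda>g. if g = f then 1 else 0)"

text \<open>bilinear extension of composition (zero on non-composable pairs)\<close>
definition conv :: "(mor \<Rightarrow> 'k::field) \<Rightarrow> (mor \<Rightarrow> 'k) \<Rightarrow> (mor \<Rightarrow> 'k)" where
  "conv \<psi> \<phi> = (\<lambda>h. \<Sum>p\<in>{(g, f). \<psi> g \<noteq> 0 \<and> \<phi> f \<noteq> 0 \<and> tgt f = src g \<and> mcomp g f = h}.
                    \<psi> (fst p) * \<phi> (snd p))"

text \<open>u_a(d_n) for n = c \<ge> 0: sum_{i=0}^{c} (-1)^i delta^i : [c-1] -> [c]\<close>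
definition ua_d :: "nat \<Rightarrow> (mor \<Rightarrow> 'k::field)" where
  "ua_d c = (\<lambda>m. \<Sum>i\<le>c. (-1) ^ i * basis_el (delta c i) m)"

text \<open>image under u_a of the path d_{c+l} ... d_{c+1} : [c-1] -> [c+l-1]
  (the identity for l = 0)\<close>
fun ua_path :: "nat \<Rightarrow> nat \<Rightarrow> (mor \<Rightarrow> 'k::field)" where
  "ua_path c 0 = basis_el (idm c)"
| "ua_path c (Suc l) = conv (ua_d (c + l)) (ua_path c l)"

text \<open>The image u_a(Omega_a): the k-span of the images of all paths of generators
(Omega_a is spanned by such paths), as a subspace of kDelta.\<close>
definition ua_image :: "(mor \<Rightarrow> 'k::field) set" where
  "ua_image = {\<phi>. \<exists>S a. finite S \<and> \<phi> = (\<lambda>m. \<Sum>p\<in>S. a p * ua_path (fst p) (snd p) m)}"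

text \<open>M is free as a left B-module (B acting by post-composition): there is a set G
of generators, each g \<in> M living in target y g (i.e. g \<in> \<oplus>_x M(x, y g)), such that every
element of M is uniquely a finite sum  \<Sum> b_g \<circ> g  with b_g \<in> \<oplus>_z B(y g, z).\<close>
definition free_left_module :: "(mor \<Rightarrow> 'k::field) set \<Rightarrow> (mor \<Rightarrow> 'k) set \<Rightarrow> bool" where
  "free_left_module B M \<longleftrightarrow> (\<exists>G y.
     (\<forall>g\<in>G. g \<in> M \<and> (\<forall>m. g m \<noteq> 0 \<longrightarrow> tgt m = y g)) \<and>
     (\<forall>\<phi>\<in>M. \<exists>!b. (\<forall>g. b g \<noteq> (\<lambda>_. 0) \<longrightarrow> g \<in> G) \<and> finite {g. b g \<noteq> (\<lambda>_. 0)} \<and>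
        (\<forall>g\<in>G. b g \<in> B \<and> (\<forall>m. b g m \<noteq> 0 \<longrightarrow> src m = y g)) \<and>
        \<phi> = (\<lambda>m. \<Sum>g\<in>{g. b g \<noteq> (\<lambda>_. 0)}. conv (b g) g m)))"

text \<open>right version: B acting by pre-composition\<close>
definition free_right_module :: "(mor \<Rightarrow> 'k::field) set \<Rightarrow> (mor \<Rightarrow> 'k) set \<Rightarrow> bool" where
  "free_right_module B M \<longleftrightarrow> (\<exists>G y.
     (\<forall>g\<in>G. g \<in> M \<and> (\<forall>m. g m \<noteq> 0 \<longrightarrow> src m = y g)) \<and>
     (\<forall>\<phi>\<in>M. \<exists>!b. (\<forall>g. b g \<noteq> (\<lambda>_. 0) \<longrightarrow> g \<in> G) \<and> finite {g. b g \<noteq> (\<lambda>_. 0)} \<and>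
        (\<forall>g\<in>G. b g \<in> B \<and> (\<forall>m. b g m \<noteq> 0 \<longrightarrow> tgt m = y g)) \<and>
        \<phi> = (\<lambda>m. \<Sum>g\<in>{g. b g \<noteq> (\<lambda>_. 0)}. conv g (b g) m)))"

end

theory Submission
  imports Defs
begin


lemma conv_eq:
  assumes "finite A" "finite C" "{g. \<psi> g \<noteq> 0} \<subseteq> A" "{f. \<phi> f \<noteq> 0} \<subseteq> C"
  shows "conv \<psi> \<phi> h = (\<Sum>p\<in>A\<times>C. if tgt (snd p) = src (fst p) \<and> mcomp (fst p) (snd p) = h
            then \<psi> (fst p) * \<phi> (snd p) else 0)"
  unfolding conv_def
  apply (rule sum.mono_neutral_cong_left)
  using assms by auto

lemma conv_zero_left[simp]: "conv (\<lambda>_. 0) \<phi> = (\<lambda>_. 0)"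
  by (simp add: conv_def)
lemma conv_zero_right[simp]: "conv \<psi> (\<lambda>_. 0) = (\<lambda>_. 0)"
  by (simp add: conv_def)

lemma conv_lin_left:
  fixes \<psi>1 :: "mor \<Rightarrow> 'k::field"
  assumes "finite {m. \<psi>1 m \<noteq> 0}" "finite {m. \<psi>2 m \<noteq> 0}" "finite {m. \<phi> m \<noteq> 0}"
  shows "conv (\<lambda>m. a * \<psi>1 m + b * \<psi>2 m) \<phi> = (\<lambda>h. a * conv \<psi>1 \<phi> h + b * conv \<psi>2 \<phi> h)"
proof
  fix h
  let ?A = "{m. \<psi>1 m \<noteq> 0} \<union> {m. \<psi>2 m \<noteq> 0}" and ?C = "{m. \<phi> m \<noteq> 0}"
  have fA: "finite ?A" using assms by auto
  have e1: "conv (\<lambda>m. a * \<psi>1 m + b * \<psi>2 m) \<phi> h = (\<Sum>p\<in>?A\<times>?C. if tgt (snd p) = src (fst p) \<and> mcomp (fst p) (snd p) = h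
            then (a * \<psi>1 (fst p) + b * \<psi>2 (fst p)) * \<phi> (snd p) else 0)"
    by (rule conv_eq[OF fA assms(3)]) auto
  have e2: "conv \<psi>1 \<phi> h = (\<Sum>p\<in>?A\<times>?C. if tgt (snd p) = src (fst p) \<and> mcomp (fst p) (snd p) = h
            then \<psi>1 (fst p) * \<phi> (snd p) else 0)"
    by (rule conv_eq[OF fA assms(3)]) auto
  have e3: "conv \<psi>2 \<phi> h = (\<Sum>p\<in>?A\<times>?C. if tgt (snd p) = src (fst p) \<and> mcomp (fst p) (snd p) = h
            then \<psi>2 (fst p) * \<phi> (snd p) else 0)"
    by (rule conv_eq[OF fA assms(3)]) auto
  show "conv (\<lambda>m. a * \<psi>1 m + b * \<psi>2 m) \<phi> h = a * conv \<psi>1 \<phi> h + b * conv \<psi>2 \<phi> h"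
    unfolding e1 e2 e3 sum_distrib_left sum.distrib[symmetric]
    by (rule sum.cong) (auto simp: algebra_simps)
qed

lemma conv_lin_right:
  fixes \<psi>1 :: "mor \<Rightarrow> 'k::field"
  assumes "finite {m. \<psi>1 m \<noteq> 0}" "finite {m. \<psi>2 m \<noteq> 0}" "finite {m. \<phi> m \<noteq> 0}"
  shows "conv \<phi> (\<lambda>m. a * \<psi>1 m + b * \<psi>2 m) = (\<lambda>h. a * conv \<phi> \<psi>1 h + b * conv \<phi> \<psi>2 h)"
proof
  fix h
  let ?A = "{m. \<psi>1 m \<noteq> 0} \<union> {m. \<psi>2 m \<noteq> 0}" and ?C = "{m. \<phi> m \<noteq> 0}"
  have fA: "finite ?A" using assms by auto
  have e1: "conv \<phi> (\<lambda>m. a * \<psi>1 m + b * \<psi>2 m) h = (\<Sum>p\<in>?C\<times>?A. if tgt (snd p) = src (fst p) \<and> mcomp (fst p) (snd p) = h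
            then \<phi> (fst p) * (a * \<psi>1 (snd p) + b * \<psi>2 (snd p)) else 0)"
    by (rule conv_eq[OF assms(3) fA]) auto
  have e2: "conv \<phi> \<psi>1 h = (\<Sum>p\<in>?C\<times>?A. if tgt (snd p) = src (fst p) \<and> mcomp (fst p) (snd p) = h
            then \<phi> (fst p) * \<psi>1 (snd p) else 0)"
    by (rule conv_eq[OF assms(3) fA]) auto
  have e3: "conv \<phi> \<psi>2 h = (\<Sum>p\<in>?C\<times>?A. if tgt (snd p) = src (fst p) \<and> mcomp (fst p) (snd p) = h
            then \<phi> (fst p) * \<psi>2 (snd p) else 0)"
    by (rule conv_eq[OF assms(3) fA]) auto
  show "conv \<phi> (\<lambda>m. a * \<psi>1 m + b * \<psi>2 m) h = a * conv \<phi> \<psi>1 h + b * conv \<phi> \<psi>2 h"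
    unfolding e1 e2 e3 sum_distrib_left sum.distrib[symmetric]
    by (rule sum.cong) (auto simp: algebra_simps)
qed

lemma finite_supp_sum:
  fixes \<psi> :: "nat \<Rightarrow> mor \<Rightarrow> 'k::field"
  assumes "finite I" "\<forall>i\<in>I. finite {m. \<psi> i m \<noteq> 0}"
  shows "finite {m. (\<Sum>i\<in>I. c i * \<psi> i m) \<noteq> 0}"
proof -
  have "{m. (\<Sum>i\<in>I. c i * \<psi> i m) \<noteq> 0} \<subseteq> (\<Union>i\<in>I. {m. \<psi> i m \<noteq> 0})"
  proof
    fix m assume "m \<in> {m. (\<Sum>i\<in>I. c i * \<psi> i m) \<noteq> 0}"
    then obtain i where "i \<in> I" "c i * \<psi> i m \<noteq> 0" using sum.not_neutral_contains_not_neutral by force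
    then show "m \<in> (\<Union>i\<in>I. {m. \<psi> i m \<noteq> 0})" by auto
  qed
  then show ?thesis using assms by (meson finite_UN_I finite_subset)
qed

lemma conv_sum_left:
  fixes \<psi> :: "nat \<Rightarrow> mor \<Rightarrow> 'k::field"
  assumes "finite I" "\<forall>i\<in>I. finite {m. \<psi> i m \<noteq> 0}" "finite {m. \<phi> m \<noteq> 0}"
  shows "conv (\<lambda>m. \<Sum>i\<in>I. c i * \<psi> i m) \<phi> = (\<lambda>h. \<Sum>i\<in>I. c i * conv (\<psi> i) \<phi> h)"
proof
  fix h
  let ?A = "\<Union>i\<in>I. {m. \<psi> i m \<noteq> 0}" and ?C = "{m. \<phi> m \<noteq> 0}"
  let ?c = "\<lambda>p. tgt (snd p) = src (fst p) \<and> mcomp (fst p) (snd p) = h"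
  have fA: "finite ?A" using assms by auto
  have e1: "conv (\<lambda>m. \<Sum>i\<in>I. c i * \<psi> i m) \<phi> h = (\<Sum>p\<in>?A\<times>?C. if ?c p
            then (\<Sum>i\<in>I. c i * \<psi> i (fst p)) * \<phi> (snd p) else 0)"
  proof (rule conv_eq[OF fA assms(3)])
    show "{g. (\<Sum>i\<in>I. c i * \<psi> i g) \<noteq> 0} \<subseteq> ?A"
      using sum.not_neutral_contains_not_neutral by force
  qed auto
  have e2: "\<And>i. i \<in> I \<Longrightarrow> conv (\<psi> i) \<phi> h = (\<Sum>p\<in>?A\<times>?C. if ?c p
            then \<psi> i (fst p) * \<phi> (snd p) else 0)"
    by (rule conv_eq[OF fA assms(3)]) auto
  have "(\<Sum>i\<in>I. c i * conv (\<psi> i) \<phi> h) = (\<Sum>i\<in>I. \<Sum>p\<in>?A\<times>?C. c i * (if ?c p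
            then \<psi> i (fst p) * \<phi> (snd p) else 0))"
    by (simp add: e2 sum_distrib_left)
  also have "\<dots> = (\<Sum>p\<in>?A\<times>?C. \<Sum>i\<in>I. c i * (if ?c p
            then \<psi> i (fst p) * \<phi> (snd p) else 0))"
    by (rule sum.swap)
  also have "\<dots> = (\<Sum>p\<in>?A\<times>?C. if ?c p
            then (\<Sum>i\<in>I. c i * \<psi> i (fst p)) * \<phi> (snd p) else 0)"
    by (rule sum.cong) (auto simp: sum_distrib_right mult.assoc)
  finally show "conv (\<lambda>m. \<Sum>i\<in>I. c i * \<psi> i m) \<phi> h = (\<Sum>i\<in>I. c i * conv (\<psi> i) \<phi> h)"
    using e1 by simp
qed

lemma conv_sum_right:
  fixes \<psi> :: "nat \<Rightarrow> mor \<Rightarrow> 'k::field"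
  assumes "finite I" "\<forall>i\<in>I. finite {m. \<psi> i m \<noteq> 0}" "finite {m. \<phi> m \<noteq> 0}"
  shows "conv \<phi> (\<lambda>m. \<Sum>i\<in>I. c i * \<psi> i m) = (\<lambda>h. \<Sum>i\<in>I. c i * conv \<phi> (\<psi> i) h)"
proof
  fix h
  let ?A = "\<Union>i\<in>I. {m. \<psi> i m \<noteq> 0}" and ?C = "{m. \<phi> m \<noteq> 0}"
  let ?c = "\<lambda>p. tgt (snd p) = src (fst p) \<and> mcomp (fst p) (snd p) = h"
  have fA: "finite ?A" using assms by auto
  have e1: "conv \<phi> (\<lambda>m. \<Sum>i\<in>I. c i * \<psi> i m) h = (\<Sum>p\<in>?C\<times>?A. if ?c p
            then \<phi> (fst p) * (\<Sum>i\<in>I. c i * \<psi> i (snd p)) else 0)"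
  proof (rule conv_eq[OF assms(3) fA])
    show "{g. (\<Sum>i\<in>I. c i * \<psi> i g) \<noteq> 0} \<subseteq> ?A"
      using sum.not_neutral_contains_not_neutral by force
  qed auto
  have e2: "\<And>i. i \<in> I \<Longrightarrow> conv \<phi> (\<psi> i) h = (\<Sum>p\<in>?C\<times>?A. if ?c p
            then \<phi> (fst p) * \<psi> i (snd p) else 0)"
    by (rule conv_eq[OF assms(3) fA]) auto
  have "(\<Sum>i\<in>I. c i * conv \<phi> (\<psi> i) h) = (\<Sum>i\<in>I. \<Sum>p\<in>?C\<times>?A. c i * (if ?c p
            then \<phi> (fst p) * \<psi> i (snd p) else 0))"
    by (simp add: e2 sum_distrib_left)
  also have "\<dots> = (\<Sum>p\<in>?C\<times>?A. \<Sum>i\<in>I. c i * (if ?c p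
            then \<phi> (fst p) * \<psi> i (snd p) else 0))"
    by (rule sum.swap)
  also have "\<dots> = (\<Sum>p\<in>?C\<times>?A. if ?c p
            then \<phi> (fst p) * (\<Sum>i\<in>I. c i * \<psi> i (snd p)) else 0)"
    by (rule sum.cong) (auto simp: sum_distrib_left mult.left_commute)
  finally show "conv \<phi> (\<lambda>m. \<Sum>i\<in>I. c i * \<psi> i m) h = (\<Sum>i\<in>I. c i * conv \<phi> (\<psi> i) h)"
    using e1 by simp
qed

lemma conv_basis:
  "conv (basis_el a :: mor \<Rightarrow> 'k::field) (basis_el b) = (\<lambda>h. if tgt b = src a \<and> mcomp a b = h then 1 else 0)"
proof
  fix h
  have "conv (basis_el a :: mor \<Rightarrow> 'k::field) (basis_el b) h = (\<Sum>p\<in>{a}\<times>{b}. if tgt (snd p) = src (fst p) \<and> mcomp (fst p) (snd p) = h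
            then basis_el a (fst p) * (basis_el b (snd p) :: 'k) else 0)"
    by (rule conv_eq) (auto simp: basis_el_def)
  then show "conv (basis_el a :: mor \<Rightarrow> 'k::field) (basis_el b) h = (if tgt b = src a \<and> mcomp a b = h then 1 else 0)"
    by (auto simp: basis_el_def)
qed

lemma finite_supp_basis[simp]: "finite {m. (basis_el f :: mor \<Rightarrow> 'k::field) m \<noteq> 0}"
  by (simp add: basis_el_def)

lemma finite_supp_ua_d[simp]: "finite {m. (ua_d c :: mor \<Rightarrow> 'k::field) m \<noteq> 0}"
  unfolding ua_d_def by (rule finite_supp_sum) auto


lemma delta_inj:
  assumes "i \<le> c" "j \<le> c" "delta c i = delta c j"
  shows "i = j"
proof (rule ccontr)
  assume ne: "i \<noteq> j"
  let ?k = "min i j"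
  have "?k < c" using assms ne by auto
  have "fn (delta c i) ?k = fn (delta c j) ?k" using assms(3) by simp
  then show False using ne \<open>?k < c\<close> by (auto simp: delta_def fn_def min_def split: if_splits)
qed

lemma src_delta[simp]: "src (delta c i) = c" and tgt_delta[simp]: "tgt (delta c i) = Suc c"
  by (auto simp: delta_def src_def tgt_def)
lemma src_idm[simp]: "src (idm c) = c" and tgt_idm[simp]: "tgt (idm c) = c"
  by (auto simp: idm_def src_def tgt_def)
lemma delta_ne_idm[simp]: "delta s i \<noteq> idm c"
  by (metis n_not_Suc_n src_delta src_idm tgt_delta tgt_idm)

lemma ua_d_supp:
  assumes "(ua_d c :: mor \<Rightarrow> 'k::field) m \<noteq> 0"
  shows "src m = c \<and> tgt m = Suc c"
proof -
  obtain i where "i \<le> c" "(-1::'k) ^ i * basis_el (delta c i) m \<noteq> 0"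
    using assms unfolding ua_d_def using sum.not_neutral_contains_not_neutral by force
  then have "m = delta c i" by (auto simp: basis_el_def split: if_splits)
  then show ?thesis by simp
qed

lemma ua_d_delta0[simp]: "(ua_d c :: mor \<Rightarrow> 'k::field) (delta c 0) = 1"
proof -
  have "(ua_d c :: mor \<Rightarrow> 'k::field) (delta c 0) = (\<Sum>i\<in>{..c}. if i = 0 then 1 else 0)"
    unfolding ua_d_def
  proof (rule sum.cong)
    fix i assume "i \<in> {..c}"
    then show "(-1::'k) ^ i * basis_el (delta c i) (delta c 0) = (if i = 0 then 1 else 0)"
      using delta_inj[of i c 0] by (auto simp: basis_el_def)
  qed simp
  then show ?thesis by simp
qed

lemma ua_d_idm[simp]: "(ua_d c :: mor \<Rightarrow> 'k::field) (idm s) = 0"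
  using ua_d_supp[of c "idm s"] by force

lemma mcomp_delta_idm: "mcomp (delta c i) (idm c) = delta c i"
  by (auto simp: mcomp_def delta_def idm_def src_def tgt_def fn_def)

lemma ua_d_sum: "(ua_d c :: mor \<Rightarrow> 'k::field) = (\<lambda>m. \<Sum>i\<in>{..c}. (-1) ^ i * basis_el (delta c i) m)"
  by (simp add: ua_d_def)

lemma ua_path1: "(ua_path c (Suc 0) :: mor \<Rightarrow> 'k::field) = ua_d c"
proof -
  have "(ua_path c (Suc 0) :: mor \<Rightarrow> 'k::field) = conv (\<lambda>m. \<Sum>i\<in>{..c}. (-1) ^ i * basis_el (delta c i) m) (basis_el (idm c))"
    by (simp add: ua_d_def)
  also have "\<dots> = (\<lambda>h. \<Sum>i\<in>{..c}. (-1) ^ i * conv (basis_el (delta c i)) (basis_el (idm c)) h)"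
    by (rule conv_sum_left) auto
  also have "\<dots> = ua_d c"
    by (rule ext, simp add: conv_basis mcomp_delta_idm, simp add: ua_d_def basis_el_def eq_commute)
  finally show ?thesis .
qed

lemma simpl_id:
  assumes "j < i" "i \<le> Suc c"
  shows "mcomp (delta (Suc c) i) (delta c j) = mcomp (delta (Suc c) j) (delta c (i - 1))"
  using assms by (auto simp: mcomp_def delta_def src_def tgt_def fn_def fun_eq_iff)

lemma dd_zero: "conv (ua_d (Suc c)) (ua_d c) = (\<lambda>_. 0::'k::field)"
proof
  fix h
  let ?M = "\<lambda>i j. mcomp (delta (Suc c) i) (delta c j)"
  let ?s = "\<lambda>p. case p of (i, j) \<Rightarrow> (-1::'k) ^ (i + j) * (if ?M i j = h then 1 else 0)"
  have c1: "conv (basis_el (delta (Suc c) i)) (ua_d c) = (\<lambda>h. \<Sum>j\<in>{..c}. (-1::'k) ^ j * (if ?M i j = h then 1 else 0))" for i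
    unfolding ua_d_sum
    by (subst conv_sum_right) (auto simp: conv_basis)
  have "conv (ua_d (Suc c)) (ua_d c) h = (\<Sum>i\<in>{..Suc c}. (-1::'k) ^ i * conv (basis_el (delta (Suc c) i)) (ua_d c) h)"
    by (subst (1) ua_d_sum, subst conv_sum_left) auto
  also have "\<dots> = (\<Sum>i\<in>{..Suc c}. \<Sum>j\<in>{..c}. ?s (i, j))"
    by (simp add: c1 sum_distrib_left power_add mult.assoc)
  also have "\<dots> = (\<Sum>p\<in>{..Suc c}\<times>{..c}. ?s p)"
    by (rule sum.cartesian_product'[symmetric])
  also have "\<dots> = (\<Sum>p\<in>({..Suc c}\<times>{..c}) \<inter> {p. fst p \<le> snd p}. ?s p) + (\<Sum>p\<in>({..Suc c}\<times>{..c}) - {p. fst p \<le> snd p}. ?s p)"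
    by (rule sum.Int_Diff) auto
  also have "(\<Sum>p\<in>({..Suc c}\<times>{..c}) - {p. fst p \<le> snd p}. ?s p) = (\<Sum>p\<in>({..Suc c}\<times>{..c}) \<inter> {p. fst p \<le> snd p}. ?s (Suc (snd p), fst p))"
  proof (rule sum.reindex_bij_betw[symmetric])
    show "bij_betw (\<lambda>p. (Suc (snd p), fst p)) ({..Suc c}\<times>{..c} \<inter> {p. fst p \<le> snd p}) ({..Suc c}\<times>{..c} - {p. fst p \<le> snd p})"
      by (rule bij_betw_byWitness[where f'="\<lambda>p. (snd p, fst p - 1)"]) auto
  qed
  also have "\<dots> = (\<Sum>p\<in>({..Suc c}\<times>{..c}) \<inter> {p. fst p \<le> snd p}. - ?s p)"
  proof (rule sum.cong)
    fix p assume "p \<in> ({..Suc c}\<times>{..c}) \<inter> {p. fst p \<le> snd p}"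
    then have "?M (Suc (snd p)) (fst p) = ?M (fst p) (snd p)"
      using simpl_id[of "fst p" "Suc (snd p)" c] by auto
    then show "?s (Suc (snd p), fst p) = - ?s p" by (cases p) (simp add: add.commute)
  qed simp
  finally show "conv (ua_d (Suc c)) (ua_d c) h = (0::'k)"
    by (simp add: sum_negf)
qed

lemma ua_path_zero: "l \<ge> 2 \<Longrightarrow> (ua_path c l :: mor \<Rightarrow> 'k::field) = (\<lambda>_. 0)"
proof (induction l)
  case 0 then show ?case by simp
next
  case (Suc l)
  show ?case
  proof (cases "l = 1")
    case True
    have "(ua_path c (Suc (Suc 0)) :: mor \<Rightarrow> 'k::field) = conv (ua_d (c + Suc 0)) (ua_path c (Suc 0))"
      by (rule ua_path.simps(2))
    then show ?thesis using dd_zero[of c] True by (simp del: ua_path.simps add: ua_path1)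
  next
    case False
    then have "l \<ge> 2" using Suc.prems by simp
    then show ?thesis using Suc.IH by simp
  qed
qed


definition Rop :: "(mor \<Rightarrow> 'k::field) \<Rightarrow> mor \<Rightarrow> 'k" where
  "Rop \<beta> m = (if m = idm (src m) then 1 else 0) * \<beta> (idm (src m)) + \<beta> (delta (src m) 0) * ua_d (src m) m"

lemma Rop_path: "Rop (ua_path c l :: mor \<Rightarrow> 'k::field) m = ua_path c l m"
proof -
  consider "l = 0" | "l = Suc 0" | "l \<ge> 2" by linarith
  then show ?thesis
  proof cases
    case 1
    then show ?thesis by (auto simp: Rop_def basis_el_def)
  next
    case 2
    show ?thesis
    proof (cases "src m = c")
      case True
      then show ?thesis using 2 by (simp del: ua_path.simps add: ua_path1 Rop_def)
    next
      case False
      then have "(ua_d c :: mor \<Rightarrow> 'k) m = 0" "(ua_d c :: mor \<Rightarrow> 'k) (delta (src m) 0) = 0"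
        using ua_d_supp[of c m] ua_d_supp[of c "delta (src m) 0"] by auto
      then show ?thesis using 2 by (simp del: ua_path.simps add: ua_path1 Rop_def)
    qed
  next
    case 3
    then show ?thesis by (simp add: ua_path_zero Rop_def)
  qed
qed

lemma Rop_sum: "Rop (\<lambda>m. \<Sum>p\<in>S. a p * \<psi> p m :: 'k::field) m = (\<Sum>p\<in>S. a p * Rop (\<psi> p) m)"
  by (simp add: Rop_def sum_distrib_left sum_distrib_right sum.distrib algebra_simps)

lemma char:
  assumes "\<beta> \<in> (ua_image :: (mor \<Rightarrow> 'k::field) set)"
  shows "\<beta> m = Rop \<beta> m"
proof -
  obtain S a where "finite S" and b: "\<beta> = (\<lambda>m. \<Sum>p\<in>S. a p * ua_path (fst p) (snd p) m)"
    using assms unfolding ua_image_def by blast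
  show ?thesis unfolding b Rop_sum Rop_path ..
qed

lemma char_left:
  assumes "\<beta> \<in> (ua_image :: (mor \<Rightarrow> 'k::field) set)" "\<forall>m. \<beta> m \<noteq> 0 \<longrightarrow> src m = y"
  shows "\<beta> = (\<lambda>m. \<beta> (idm y) * basis_el (idm y) m + \<beta> (delta y 0) * ua_d y m)"
proof
  fix m
  show "\<beta> m = \<beta> (idm y) * basis_el (idm y) m + \<beta> (delta y 0) * ua_d y m"
  proof (cases "src m = y")
    case True
    then show ?thesis using char[OF assms(1), of m]
      by (auto simp: Rop_def basis_el_def)
  next
    case False
    have z: "\<beta> (idm (src m)) = 0" "\<beta> (delta (src m) 0) = 0" using assms(2) False
      by (metis src_idm, metis src_delta)
    have "(ua_d y :: mor \<Rightarrow> 'k) m = 0" using ua_d_supp[of y m] False by auto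
    moreover have "basis_el (idm y) m = (0::'k)" using False by (auto simp: basis_el_def)
    ultimately show ?thesis using char[OF assms(1), of m] z
      by (simp add: Rop_def)
  qed
qed

definition Xr :: "nat \<Rightarrow> mor \<Rightarrow> 'k::field" where
  "Xr y m = (if 0 < y then ua_d (y - 1) m else 0)"

lemma char_right:
  assumes "\<beta> \<in> (ua_image :: (mor \<Rightarrow> 'k::field) set)" "\<forall>m. \<beta> m \<noteq> 0 \<longrightarrow> tgt m = y"
  shows "\<beta> = (\<lambda>m. \<beta> (idm y) * basis_el (idm y) m + \<beta> (delta (y - 1) 0) * Xr y m)"
proof
  fix m
  have e: "\<beta> m = (if m = idm (src m) then 1 else 0) * \<beta> (idm (src m)) + \<beta> (delta (src m) 0) * ua_d (src m) m"
    using char[OF assms(1), of m] by (simp add: Rop_def)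
  have t1: "(if m = idm (src m) then 1 else 0) * \<beta> (idm (src m)) = \<beta> (idm y) * basis_el (idm y) m"
  proof (cases "src m = y")
    case True then show ?thesis by (auto simp: basis_el_def)
  next
    case False
    then have "\<beta> (idm (src m)) = 0" using assms(2) by (metis tgt_idm)
    moreover have "basis_el (idm y) m = (0::'k)" using False by (auto simp: basis_el_def)
    ultimately show ?thesis by simp
  qed
  have t2: "\<beta> (delta (src m) 0) * ua_d (src m) m = \<beta> (delta (y - 1) 0) * Xr y m"
  proof (cases "Suc (src m) = y")
    case True then show ?thesis by (auto simp: Xr_def)
  next
    case False
    then have "\<beta> (delta (src m) 0) = 0" using assms(2) by (metis tgt_delta)
    moreover have "(Xr y m :: 'k) = 0"
      using False by (cases "(ua_d (y - 1) m :: 'k) = 0") (auto simp: Xr_def dest: ua_d_supp)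
    ultimately show ?thesis by simp
  qed
  show "\<beta> m = \<beta> (idm y) * basis_el (idm y) m + \<beta> (delta (y - 1) 0) * Xr y m"
    using e t1 t2 by simp
qed




lemma decomp_exists:
  fixes D :: "mor \<Rightarrow> mor \<Rightarrow> 'k::field"
  assumes EP: "E \<subseteq> P" and inj: "inj_on sh E" and img: "sh ` E = {m. valid_mor m} - P"
   and tri: "\<forall>f\<in>E. \<forall>q. q \<notin> P \<longrightarrow> D f q = (if q = sh f then 1 else 0)"
   and fin: "\<forall>f\<in>E. finite {q. D f q \<noteq> 0}"
   and phi: "\<phi> \<in> kDelta"
  shows "\<exists>F lam mu. finite F \<and> F \<subseteq> P \<and> \<phi> = (\<lambda>m. \<Sum>f\<in>F. lam f * basis_el f m + mu f * D f m)"
proof -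
  define F1 where "F1 = {q. \<phi> q \<noteq> 0}"
  have fF1: "finite F1" using phi by (simp add: kDelta_def F1_def)
  define FE where "FE = sh -` F1 \<inter> E"
  have fFE: "finite FE" unfolding FE_def using fF1 inj by (rule finite_vimage_IntI)
  define \<psi> where "\<psi> = (\<lambda>m. \<phi> m - (\<Sum>f\<in>FE. \<phi> (sh f) * D f m))"
  define F2 where "F2 = {m. \<psi> m \<noteq> 0}"
  have "F2 \<subseteq> F1 \<union> (\<Union>f\<in>FE. {q. D f q \<noteq> 0})"
  proof
    fix m assume "m \<in> F2"
    then have "\<phi> m \<noteq> 0 \<or> (\<Sum>f\<in>FE. \<phi> (sh f) * D f m) \<noteq> 0" by (auto simp: F2_def \<psi>_def)
    then show "m \<in> F1 \<union> (\<Union>f\<in>FE. {q. D f q \<noteq> 0})"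
    proof
      assume "(\<Sum>f\<in>FE. \<phi> (sh f) * D f m) \<noteq> 0"
      then obtain f where "f \<in> FE" "\<phi> (sh f) * D f m \<noteq> 0"
        using sum.not_neutral_contains_not_neutral by blast
      then show ?thesis by auto
    qed (simp add: F1_def)
  qed
  moreover have "finite (F1 \<union> (\<Union>f\<in>FE. {q. D f q \<noteq> 0}))"
    using fF1 fFE fin by (auto simp: FE_def)
  ultimately have fF2: "finite F2" by (rule finite_subset)
  have F2P: "F2 \<subseteq> P"
  proof
    fix q assume q: "q \<in> F2"
    show "q \<in> P"
    proof (rule ccontr)
      assume nP: "q \<notin> P"
      have s1: "(\<Sum>f\<in>FE. \<phi> (sh f) * D f q) = (\<Sum>f\<in>FE. if q = sh f then \<phi> q else 0)"
      proof (rule sum.cong)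
        fix f assume "f \<in> FE"
        then have "f \<in> E" by (simp add: FE_def)
        then have "D f q = (if q = sh f then 1 else 0)" using tri nP by blast
        then show "\<phi> (sh f) * D f q = (if q = sh f then \<phi> q else 0)" by simp
      qed simp
      have "\<psi> q = 0"
      proof (cases "valid_mor q")
        case True
        then obtain f' where f': "f' \<in> E" "q = sh f'" using img nP by blast
        have "(\<Sum>f\<in>FE. if q = sh f then \<phi> q else 0) = (\<Sum>f\<in>FE. if f' = f then \<phi> q else 0)"
          by (rule sum.cong) (use f' inj in \<open>auto simp: FE_def inj_on_def\<close>)
        also have "\<dots> = (if f' \<in> FE then \<phi> q else 0)" using fFE by simp
        also have "\<dots> = \<phi> q" using f' by (auto simp: FE_def F1_def)
        finally show ?thesis by (simp add: \<psi>_def s1)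
      next
        case False
        then have "\<phi> q = 0" using phi unfolding kDelta_def by blast
        moreover have "\<forall>f\<in>FE. q \<noteq> sh f" using False img by (auto simp: FE_def)
        ultimately show ?thesis by (simp add: \<psi>_def s1)
      qed
      then show False using q by (simp add: F2_def)
    qed
  qed
  define mu where "mu = (\<lambda>f. if f \<in> FE then \<phi> (sh f) else 0)"
  have "\<phi> = (\<lambda>m. \<Sum>f\<in>F2 \<union> FE. \<psi> f * basis_el f m + mu f * D f m)"
  proof
    fix m
    have a: "(\<Sum>f\<in>F2 \<union> FE. \<psi> f * basis_el f m) = \<psi> m"
    proof -
      have "(\<Sum>f\<in>F2 \<union> FE. \<psi> f * basis_el f m) = (\<Sum>f\<in>F2 \<union> FE. if m = f then \<psi> m else 0)"
        by (rule sum.cong) (auto simp: basis_el_def)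
      also have "\<dots> = \<psi> m" using fF2 fFE by (auto simp: F2_def)
      finally show ?thesis .
    qed
    have b: "(\<Sum>f\<in>F2 \<union> FE. mu f * D f m) = (\<Sum>f\<in>FE. \<phi> (sh f) * D f m)"
    proof -
      have "(\<Sum>f\<in>F2 \<union> FE. mu f * D f m) = (\<Sum>f\<in>FE. mu f * D f m)"
        by (rule sum.mono_neutral_right) (use fF2 fFE in \<open>auto simp: mu_def\<close>)
      also have "\<dots> = (\<Sum>f\<in>FE. \<phi> (sh f) * D f m)"
        by (rule sum.cong) (auto simp: mu_def)
      finally show ?thesis .
    qed
    show "\<phi> m = (\<Sum>f\<in>F2 \<union> FE. \<psi> f * basis_el f m + mu f * D f m)"
      unfolding sum.distrib a b by (simp add: \<psi>_def)
  qed
  moreover have "F2 \<union> FE \<subseteq> P" using F2P EP by (auto simp: FE_def)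
  ultimately show ?thesis using fF2 fFE by blast
qed

lemma decomp_unique:
  fixes D :: "mor \<Rightarrow> mor \<Rightarrow> 'k::field"
  assumes EP: "E \<subseteq> P" and inj: "inj_on sh E" and img: "\<forall>f\<in>E. sh f \<notin> P"
   and tri: "\<forall>f\<in>E. \<forall>q. q \<notin> P \<longrightarrow> D f q = (if q = sh f then 1 else 0)"
   and PE: "\<forall>f\<in>P-E. \<forall>m. D f m = 0"
   and F: "finite F" "F \<subseteq> P"
   and z: "\<forall>m. (\<Sum>f\<in>F. lam f * basis_el f m + mu f * D f m) = 0"
  shows "\<forall>f\<in>F. lam f = 0 \<and> (f \<in> E \<longrightarrow> mu f = 0)"
proof -
  have mu0: "mu f0 = 0" if f0: "f0 \<in> F" "f0 \<in> E" for f0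
  proof -
    have "(\<Sum>f\<in>F. lam f * basis_el f (sh f0) + mu f * D f (sh f0)) = (\<Sum>f\<in>F. if f = f0 then mu f0 else 0)"
    proof (rule sum.cong)
      fix f assume f: "f \<in> F"
      have "basis_el f (sh f0) = (0::'k)" using f F img f0 by (auto simp: basis_el_def)
      moreover have "D f (sh f0) = (if f = f0 then 1 else 0)"
      proof (cases "f \<in> E")
        case True
        have "D f (sh f0) = (if sh f0 = sh f then 1 else 0)" using tri img f0 True by blast
        moreover have "sh f0 = sh f \<longleftrightarrow> f = f0" using inj True f0 inj_on_eq_iff by metis
        ultimately show ?thesis by simp
      next
        case False
        then have "f \<noteq> f0" using f0 by blast
        moreover have "D f (sh f0) = 0" using PE f F False by blast
        ultimately show ?thesis by simp
      qed
      ultimately show "lam f * basis_el f (sh f0) + mu f * D f (sh f0) = (if f = f0 then mu f0 else 0)"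
        by simp
    qed simp
    also have "\<dots> = mu f0" using F f0 by simp
    finally show ?thesis using z by simp
  qed
  have lam0: "lam f0 = 0" if f0: "f0 \<in> F" for f0
  proof -
    have "(\<Sum>f\<in>F. lam f * basis_el f f0 + mu f * D f f0) = (\<Sum>f\<in>F. if f = f0 then lam f0 else 0)"
    proof (rule sum.cong)
      fix f assume f: "f \<in> F"
      have "mu f * D f f0 = 0"
      proof (cases "f \<in> E")
        case True then show ?thesis using mu0 f by simp
      next
        case False then have "D f f0 = 0" using PE f F by blast
        then show ?thesis by simp
      qed
      then show "lam f * basis_el f f0 + mu f * D f f0 = (if f = f0 then lam f0 else 0)"
        by (auto simp: basis_el_def)
    qed simp
    also have "\<dots> = lam f0" using F f0 by simp
    finally show ?thesis using z by simp
  qed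
  show ?thesis using mu0 lam0 by blast
qed


lemma assembly:
  fixes act :: "(mor \<Rightarrow> 'k::field) \<Rightarrow> (mor \<Rightarrow> 'k) \<Rightarrow> (mor \<Rightarrow> 'k)"
    and sg sb :: "mor \<Rightarrow> nat" and X D :: "mor \<Rightarrow> mor \<Rightarrow> 'k" and w sh :: "mor \<Rightarrow> mor"
  assumes EP: "E \<subseteq> P" and Pv: "P \<subseteq> {m. valid_mor m}" and inj: "inj_on sh E"
   and img: "sh ` E = {m. valid_mor m} - P"
   and tri: "\<forall>f\<in>E. \<forall>q. q \<notin> P \<longrightarrow> D f q = (if q = sh f then 1 else 0)"
   and fin: "\<forall>f\<in>E. finite {q. D f q \<noteq> 0}"
   and XPE: "\<forall>f\<in>P-E. \<forall>m. X f m = 0"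
   and act0: "\<forall>g. act (\<lambda>_. 0) g = (\<lambda>_. 0)"
   and actlin: "\<forall>f\<in>P. \<forall>a b. act (\<lambda>m. a * basis_el (idm (sg f)) m + b * X f m) (basis_el f) = (\<lambda>m. a * basis_el f m + b * D f m)"
   and charB: "\<forall>f\<in>P. \<forall>\<beta>. \<beta> \<in> ua_image \<and> (\<forall>m. \<beta> m \<noteq> 0 \<longrightarrow> sb m = sg f) \<longrightarrow>
        \<beta> = (\<lambda>m. \<beta> (idm (sg f)) * basis_el (idm (sg f)) m + \<beta> (w f) * X f m)"
   and memB: "\<forall>f\<in>P. \<forall>a b. (\<lambda>m. a * basis_el (idm (sg f)) m + b * X f m) \<in> ua_image \<and>
        (\<forall>m. a * basis_el (idm (sg f)) m + b * X f m \<noteq> 0 \<longrightarrow> sb m = sg f)"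
   and zeroB: "(\<lambda>_. 0::'k) \<in> (ua_image :: (mor \<Rightarrow> 'k) set)"
  shows "\<exists>G y. (\<forall>g\<in>G. g \<in> kDelta \<and> (\<forall>m. g m \<noteq> 0 \<longrightarrow> sg m = y g)) \<and>
     (\<forall>\<phi>\<in>kDelta. \<exists>!b. (\<forall>g. b g \<noteq> (\<lambda>_. 0) \<longrightarrow> g \<in> G) \<and> finite {g. b g \<noteq> (\<lambda>_. 0)} \<and>
        (\<forall>g\<in>G. b g \<in> ua_image \<and> (\<forall>m. b g m \<noteq> 0 \<longrightarrow> sb m = y g)) \<and>
        \<phi> = (\<lambda>m. \<Sum>g\<in>{g. b g \<noteq> (\<lambda>_. 0)}. act (b g) g m))"
proof -
  define fo :: "(mor \<Rightarrow> 'k) \<Rightarrow> mor" where "fo g = (SOME m. g m \<noteq> 0)" for g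
  have fo_e: "fo (basis_el f) = f" for f
    unfolding fo_def by (rule some_equality) (auto simp: basis_el_def split: if_splits)
  have inj_e: "inj_on (basis_el :: mor \<Rightarrow> mor \<Rightarrow> 'k) A" for A by (metis fo_e inj_onI)
  define G where "G = (basis_el ` P :: (mor \<Rightarrow> 'k) set)"
  define y where "y g = sg (fo g)" for g
  have D0: "D f m = 0" if f: "f \<in> P - E" for f m
  proof -
    have z: "(\<lambda>m. 0 * basis_el (idm (sg f)) m + 1 * X f m) = (\<lambda>_. 0::'k)" using XPE f by auto
    have "act (\<lambda>m. 0 * basis_el (idm (sg f)) m + 1 * X f m) (basis_el f) = (\<lambda>m. 0 * basis_el f m + 1 * D f m)"
      using actlin f by blast
    moreover have "act (\<lambda>m. 0 * basis_el (idm (sg f)) m + 1 * X f m) (basis_el f) = (\<lambda>_. 0)"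
      using act0 z by metis
    ultimately have "(\<lambda>m. 0 * basis_el f m + 1 * D f m) = (\<lambda>_. 0::'k)" by simp
    from fun_cong[OF this, of m] show ?thesis by simp
  qed
  have part1: "\<forall>g\<in>G. g \<in> kDelta \<and> (\<forall>m. g m \<noteq> 0 \<longrightarrow> sg m = y g)"
  proof
    fix g assume "g \<in> G"
    then obtain f where f: "f \<in> P" "g = basis_el f" by (auto simp: G_def)
    have yg: "y g = sg f" by (simp add: y_def fo_e f)
    show "g \<in> kDelta \<and> (\<forall>m. g m \<noteq> 0 \<longrightarrow> sg m = y g)"
      unfolding yg using Pv f by (auto simp: kDelta_def basis_el_def)
  qed
  define Q where "Q \<phi> b \<longleftrightarrow> (\<forall>g. b g \<noteq> (\<lambda>_. 0) \<longrightarrow> g \<in> G) \<and> finite {g. b g \<noteq> (\<lambda>_. 0)} \<and>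
        (\<forall>g\<in>G. b g \<in> ua_image \<and> (\<forall>m. b g m \<noteq> 0 \<longrightarrow> sb m = y g)) \<and>
        \<phi> = (\<lambda>m. \<Sum>g\<in>{g. b g \<noteq> (\<lambda>_. 0)}. act (b g) g m)" for \<phi> b
  have QA: "g \<in> G" if "Q \<phi> b" "b g \<noteq> (\<lambda>_. 0)" for \<phi> b g
    using that unfolding Q_def by blast
  have QB: "finite {g. b g \<noteq> (\<lambda>_. 0)}" if "Q \<phi> b" for \<phi> b
    using that unfolding Q_def by (rule conjunct1[OF conjunct2])
  have QC: "b g \<in> ua_image \<and> (\<forall>m. b g m \<noteq> 0 \<longrightarrow> sb m = y g)" if "Q \<phi> b" "g \<in> G" for \<phi> b g
    using that unfolding Q_def by blast
  have QD: "\<phi> = (\<lambda>m. \<Sum>g\<in>{g. b g \<noteq> (\<lambda>_. 0)}. act (b g) g m)" if "Q \<phi> b" for \<phi> b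
    using that unfolding Q_def by (rule conjunct2[OF conjunct2[OF conjunct2]])
  have sumF: "(\<lambda>m. \<Sum>g\<in>{g. b g \<noteq> (\<lambda>_. 0)}. act (b g) g m) = (\<lambda>m. \<Sum>f\<in>F. act (b (basis_el f)) (basis_el f) m)"
    if "finite F" "{g. b g \<noteq> (\<lambda>_. 0)} \<subseteq> basis_el ` F" for b F
  proof
    fix m
    have "(\<Sum>g\<in>{g. b g \<noteq> (\<lambda>_. 0)}. act (b g) g m) = (\<Sum>g\<in>basis_el ` F. act (b g) g m)"
      by (rule sum.mono_neutral_left) (use that act0 in auto)
    also have "\<dots> = (\<Sum>f\<in>F. act (b (basis_el f)) (basis_el f) m)"
      by (rule sum.reindex[OF inj_e, unfolded comp_def])
    finally show "(\<Sum>g\<in>{g. b g \<noteq> (\<lambda>_. 0)}. act (b g) g m) = (\<Sum>f\<in>F. act (b (basis_el f)) (basis_el f) m)" .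
  qed
  have ex: "\<exists>b. Q \<phi> b" if \<phi>: "\<phi> \<in> kDelta" for \<phi>
  proof -
    obtain F lam mu where F: "finite F" "F \<subseteq> P" and rep: "\<phi> = (\<lambda>m. \<Sum>f\<in>F. lam f * basis_el f m + mu f * D f m)"
      using decomp_exists[OF EP inj img tri fin \<phi>] by blast
    define b where "b g = (if g \<in> basis_el ` F then (\<lambda>m. lam (fo g) * basis_el (idm (sg (fo g))) m + mu (fo g) * X (fo g) m) else (\<lambda>_. 0))" for g
    have b1: "{g. b g \<noteq> (\<lambda>_. 0)} \<subseteq> basis_el ` F" by (auto simp: b_def)
    have "Q \<phi> b"
      unfolding Q_def
    proof (intro conjI)
      show "\<forall>g. b g \<noteq> (\<lambda>_. 0) \<longrightarrow> g \<in> G" using b1 F by (auto simp: G_def)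
      show "finite {g. b g \<noteq> (\<lambda>_. 0)}" using b1 F finite_subset by blast
      show "\<forall>g\<in>G. b g \<in> ua_image \<and> (\<forall>m. b g m \<noteq> 0 \<longrightarrow> sb m = y g)"
      proof
        fix g assume "g \<in> G"
        then obtain f where f: "f \<in> P" "g = basis_el f" by (auto simp: G_def)
        show "b g \<in> ua_image \<and> (\<forall>m. b g m \<noteq> 0 \<longrightarrow> sb m = y g)"
        proof (cases "g \<in> basis_el ` F")
          case True
          then show ?thesis using memB f by (simp add: b_def fo_e y_def)
        next
          case False
          then show ?thesis using zeroB by (simp add: b_def)
        qed
      qed
      have "(\<lambda>m. \<Sum>g\<in>{g. b g \<noteq> (\<lambda>_. 0)}. act (b g) g m) = (\<lambda>m. \<Sum>f\<in>F. act (b (basis_el f)) (basis_el f) m)"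
        by (rule sumF[OF F(1) b1])
      also have "\<dots> = (\<lambda>m. \<Sum>f\<in>F. lam f * basis_el f m + mu f * D f m)"
      proof (rule ext, rule sum.cong)
        fix m f assume "f \<in> F"
        then have "b (basis_el f) = (\<lambda>m. lam f * basis_el (idm (sg f)) m + mu f * X f m)" "f \<in> P"
          using F by (auto simp: b_def fo_e)
        then show "act (b (basis_el f)) (basis_el f) m = lam f * basis_el f m + mu f * D f m"
          using actlin by simp
      qed simp
      finally show "\<phi> = (\<lambda>m. \<Sum>g\<in>{g. b g \<noteq> (\<lambda>_. 0)}. act (b g) g m)" using rep by simp
    qed
    then show ?thesis by blast
  qed
  have un: "b1 = b2" if \<phi>: "\<phi> \<in> kDelta" and q1: "Q \<phi> b1" and q2: "Q \<phi> b2" for \<phi> b1 b2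
  proof -
    define Fb :: "((mor \<Rightarrow> 'k) \<Rightarrow> (mor \<Rightarrow> 'k)) \<Rightarrow> mor set" where "Fb b = {f\<in>P. b (basis_el f) \<noteq> (\<lambda>_. 0)}" for b
    define lb :: "((mor \<Rightarrow> 'k) \<Rightarrow> (mor \<Rightarrow> 'k)) \<Rightarrow> mor \<Rightarrow> 'k" where "lb b f = b (basis_el f) (idm (sg f))" for b f
    define mb :: "((mor \<Rightarrow> 'k) \<Rightarrow> (mor \<Rightarrow> 'k)) \<Rightarrow> mor \<Rightarrow> 'k" where "mb b f = b (basis_el f) (w f)" for b f
    have fin_b: "finite (Fb b)" if q: "Q \<phi> b" for b
    proof -
      have "basis_el ` Fb b \<subseteq> {g. b g \<noteq> (\<lambda>_. 0)}" by (auto simp: Fb_def)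
      then have "finite (basis_el ` Fb b :: (mor \<Rightarrow> 'k) set)" using QB[OF q] by (rule finite_subset)
      then show "finite (Fb b)" using inj_e finite_imageD by blast
    qed
    have form: "b (basis_el f) = (\<lambda>m. lb b f * basis_el (idm (sg f)) m + mb b f * X f m)"
      if q: "Q \<phi> b" and f: "f \<in> P" for b f
    proof -
      have "basis_el f \<in> G" using f by (simp add: G_def)
      then have "b (basis_el f) \<in> ua_image \<and> (\<forall>m. b (basis_el f) m \<noteq> 0 \<longrightarrow> sb m = sg f)"
        using QC[OF q] by (simp add: y_def fo_e)
      then show ?thesis using charB f by (simp add: lb_def mb_def)
    qed
    have sum_b: "\<phi> m = (\<Sum>f\<in>F. lb b f * basis_el f m + mb b f * D f m)"
      if q: "Q \<phi> b" and F: "finite F" "Fb b \<subseteq> F" "F \<subseteq> P" for b F m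
    proof -
      have "{g. b g \<noteq> (\<lambda>_. 0)} \<subseteq> basis_el ` F"
      proof
        fix g assume g: "g \<in> {g. b g \<noteq> (\<lambda>_. 0)}"
        then have "g \<in> G" using QA[OF q] by simp
        then obtain f where "f \<in> P" "g = basis_el f" by (auto simp: G_def)
        then show "g \<in> basis_el ` F" using g F by (auto simp: Fb_def)
      qed
      then have "\<phi> = (\<lambda>m. \<Sum>f\<in>F. act (b (basis_el f)) (basis_el f) m)"
        using QD[OF q] sumF[OF F(1)] by simp
      also have "\<dots> = (\<lambda>m. \<Sum>f\<in>F. lb b f * basis_el f m + mb b f * D f m)"
      proof (rule ext, rule sum.cong)
        fix m f assume "f \<in> F"
        then have "f \<in> P" using F by auto
        then show "act (b (basis_el f)) (basis_el f) m = lb b f * basis_el f m + mb b f * D f m"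
          using form[OF q] actlin by simp
      qed simp
      finally show ?thesis by simp
    qed
    define F where "F = Fb b1 \<union> Fb b2"
    have fF1: "finite F" using fin_b[OF q1] fin_b[OF q2] by (simp add: F_def)
    have fF2: "F \<subseteq> P" unfolding F_def Fb_def by blast
    have s1: "Fb b1 \<subseteq> F" "Fb b2 \<subseteq> F" unfolding F_def by blast+
    have z: "\<forall>m. (\<Sum>f\<in>F. (lb b1 f - lb b2 f) * basis_el f m + (mb b1 f - mb b2 f) * D f m) = 0"
    proof
      fix m
      have "(\<Sum>f\<in>F. (lb b1 f - lb b2 f) * basis_el f m + (mb b1 f - mb b2 f) * D f m)
          = (\<Sum>f\<in>F. (lb b1 f * basis_el f m + mb b1 f * D f m) - (lb b2 f * basis_el f m + mb b2 f * D f m))"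
        by (rule sum.cong) (simp_all add: algebra_simps)
      also have "\<dots> = (\<Sum>f\<in>F. lb b1 f * basis_el f m + mb b1 f * D f m) - (\<Sum>f\<in>F. lb b2 f * basis_el f m + mb b2 f * D f m)"
        by (rule sum_subtractf)
      also have "(\<Sum>f\<in>F. lb b1 f * basis_el f m + mb b1 f * D f m) = \<phi> m"
        by (rule sym, rule sum_b[OF q1 fF1 s1(1) fF2])
      also have "(\<Sum>f\<in>F. lb b2 f * basis_el f m + mb b2 f * D f m) = \<phi> m"
        by (rule sym, rule sum_b[OF q2 fF1 s1(2) fF2])
      finally show "(\<Sum>f\<in>F. (lb b1 f - lb b2 f) * basis_el f m + (mb b1 f - mb b2 f) * D f m) = 0"
        by simp
    qed
    have img': "\<forall>f\<in>E. sh f \<notin> P" using img by blast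
    have D0': "\<forall>f\<in>P-E. \<forall>m. D f m = 0" using D0 by blast
    have eq: "\<forall>f\<in>F. lb b1 f - lb b2 f = 0 \<and> (f \<in> E \<longrightarrow> mb b1 f - mb b2 f = 0)"
      by (rule decomp_unique[OF EP inj img' tri D0' fF1 fF2 z])
    show "b1 = b2"
    proof
      fix g
      show "b1 g = b2 g"
      proof (cases "g \<in> G")
        case False
        then have "b1 g = (\<lambda>_. 0)" "b2 g = (\<lambda>_. 0)" using QA[OF q1] QA[OF q2] by blast+
        then show ?thesis by simp
      next
        case True
        then obtain f where f: "f \<in> P" "g = basis_el f" by (auto simp: G_def)
        show ?thesis
        proof (cases "f \<in> F")
          case True
          then have l: "lb b1 f = lb b2 f" and m: "f \<in> E \<Longrightarrow> mb b1 f = mb b2 f" using eq by auto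
          have X0: "f \<notin> E \<Longrightarrow> X f = (\<lambda>_. 0)" using XPE f by auto
          show ?thesis unfolding f(2) form[OF q1 f(1)] form[OF q2 f(1)] l
            using m X0 by (cases "f \<in> E") simp_all
        next
          case False
          then have "b1 (basis_el f) = (\<lambda>_. 0)" "b2 (basis_el f) = (\<lambda>_. 0)" using f by (auto simp: F_def Fb_def)
          then show ?thesis using f by simp
        qed
      qed
    qed
  qed
  have all: "\<forall>\<phi>\<in>kDelta. \<exists>!b. Q \<phi> b"
  proof
    fix \<phi> :: "mor \<Rightarrow> 'k" assume \<phi>: "\<phi> \<in> kDelta"
    show "\<exists>!b. Q \<phi> b" by (rule ex_ex1I[OF ex[OF \<phi>]]) (rule un[OF \<phi>])
  qed
  show ?thesis
    by (rule exI[of _ G], rule exI[of _ y], rule conjI[OF part1 all[unfolded Q_def]])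
qed






lemma valid_tr: "valid_mor (c, d, g) \<longleftrightarrow> (\<forall>r s. r < s \<and> s < c \<longrightarrow> g r < g s) \<and> (\<forall>i<c. g i < d) \<and> (\<forall>i\<ge>c. g i = 0)"
  unfolding valid_mor_def strict_mono_on_def src_def tgt_def fn_def by auto

lemma mor_cases: obtains c d g where "f = (c, d, g)" by (cases f) auto

lemma sum_alt: "(\<Sum>i\<le>n. (-1::'k::field) ^ i) = (if even n then 1 else 0)"
  by (induction n) auto

definition a0 :: "mor \<Rightarrow> nat" where "a0 f = (if src f = 0 then tgt f else fn f 0)"
definition PL :: "mor set" where "PL = {f. valid_mor f \<and> even (a0 f)}"
definition shL :: "mor \<Rightarrow> mor" where "shL f = (src f, Suc (tgt f), \<lambda>i. if i < src f then Suc (fn f i) else 0)"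

lemma triple_simps[simp]: "src (c, d, g) = c" "tgt (c, d, g) = d" "fn (c, d, g) = g"
  by (auto simp: src_def tgt_def fn_def)

lemma mcomp_delta_left:
  assumes "valid_mor (c, d, g)"
  shows "mcomp (delta d i) (c, d, g) = (c, Suc d, \<lambda>j. if j < c then (if g j < i then g j else Suc (g j)) else 0)"
  using assms by (auto simp: mcomp_def delta_def valid_tr fun_eq_iff)

lemma mcomp_delta_left_valid:
  assumes "valid_mor (c, d, g)" "i \<le> d"
  shows "valid_mor (mcomp (delta d i) (c, d, g))"
  using assms unfolding mcomp_delta_left[OF assms(1)] valid_tr
  by (auto, (metis Suc_lessD less_trans_Suc not_less_eq)+)

lemma left_tri_term:
  assumes "f \<in> PL" "q \<notin> PL" "i \<le> tgt f"
  shows "(mcomp (delta (tgt f) i) f = q) \<longleftrightarrow> (i \<le> a0 f \<and> q = shL f)"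
proof -
  obtain c d g where f: "f = (c, d, g)" by (rule mor_cases)
  have v: "valid_mor (c, d, g)" and ev: "even (a0 f)" using assms(1) f by (auto simp: PL_def)
  show ?thesis
  proof (cases "i \<le> a0 f")
    case True
    have ge: "g j \<ge> i" if "j < c" for j
    proof -
      have "c > 0" using that by simp
      then have "a0 f = g 0" by (simp add: a0_def f)
      moreover have "g 0 \<le> g j" using v that unfolding valid_tr by (metis le_eq_less_or_eq neq0_conv)
      ultimately show ?thesis using True by simp
    qed
    then have "mcomp (delta (tgt f) i) f = shL f"
      unfolding f triple_simps mcomp_delta_left[OF v] shL_def by (auto simp: fun_eq_iff dest!: ge)
    then show ?thesis using True by auto
  next
    case False
    then have c0: "c > 0" using assms(3) unfolding a0_def f triple_simps by (cases "c = 0") auto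
    then have a: "a0 f = g 0" by (simp add: a0_def f)
    have "mcomp (delta d i) (c, d, g) \<in> PL"
      using mcomp_delta_left_valid[OF v] assms(3) ev False c0 a
      unfolding PL_def by (simp add: mcomp_delta_left[OF v] a0_def f)
    then show ?thesis using False assms(2) f by auto
  qed
qed

lemma left_tri:
  assumes "f \<in> PL" "q \<notin> PL"
  shows "conv (ua_d (tgt f)) (basis_el f) q = (if q = shL f then 1 else (0::'k::field))"
proof -
  have a: "a0 f \<le> tgt f" using assms(1) unfolding PL_def a0_def valid_mor_def by auto
  have "conv (ua_d (tgt f)) (basis_el f) q = (\<Sum>i\<le>tgt f. (-1::'k) ^ i * conv (basis_el (delta (tgt f) i)) (basis_el f) q)"
    unfolding ua_d_sum by (subst conv_sum_left) auto
  also have "\<dots> = (\<Sum>i\<le>tgt f. if i \<le> a0 f then (-1::'k) ^ i * (if q = shL f then 1 else 0) else 0)"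
    by (rule sum.cong) (auto simp: conv_basis left_tri_term[OF assms])
  also have "\<dots> = (\<Sum>i\<le>a0 f. (-1::'k) ^ i * (if q = shL f then 1 else 0))"
    by (rule sum.mono_neutral_cong_right) (use a in auto)
  also have "\<dots> = (if q = shL f then 1 else 0)"
    using assms(1) by (simp add: sum_distrib_right[symmetric] sum_alt PL_def)
  finally show ?thesis .
qed


lemma finite_supp_conv:
  assumes "finite {m. \<psi> m \<noteq> 0}" "finite {m. \<phi> m \<noteq> 0}"
  shows "finite {h. conv \<psi> \<phi> h \<noteq> (0::'k::field)}"
proof -
  have "{h. conv \<psi> \<phi> h \<noteq> 0} \<subseteq> (\<lambda>p. mcomp (fst p) (snd p)) ` ({m. \<psi> m \<noteq> 0} \<times> {m. \<phi> m \<noteq> 0})"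
  proof
    fix h assume "h \<in> {h. conv \<psi> \<phi> h \<noteq> 0}"
    then have "conv \<psi> \<phi> h \<noteq> 0" by simp
    then obtain p where p: "p \<in> {(g, f). \<psi> g \<noteq> 0 \<and> \<phi> f \<noteq> 0 \<and> tgt f = src g \<and> mcomp g f = h}"
      unfolding conv_def by (rule sum.not_neutral_contains_not_neutral)
    obtain g f where "p = (g, f)" by (cases p)
    with p have "\<psi> g \<noteq> 0" "\<phi> f \<noteq> 0" "h = mcomp g f" by auto
    then show "h \<in> (\<lambda>p. mcomp (fst p) (snd p)) ` ({m. \<psi> m \<noteq> 0} \<times> {m. \<phi> m \<noteq> 0})"
      by (intro image_eqI[of _ _ "(g, f)"]) auto
  qed
  then show ?thesis by (rule finite_subset) (intro finite_imageI finite_cartesian_product assms)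
qed

lemma shL_inj: "inj_on shL PL"
proof
  fix f1 f2 assume f: "f1 \<in> PL" "f2 \<in> PL" "shL f1 = shL f2"
  obtain c1 d1 g1 where 1: "f1 = (c1, d1, g1)" by (rule mor_cases)
  obtain c2 d2 g2 where 2: "f2 = (c2, d2, g2)" by (rule mor_cases)
  have v: "valid_mor (c1, d1, g1)" "valid_mor (c2, d2, g2)" using f 1 2 by (auto simp: PL_def)
  have e0: "(c1, Suc d1, \<lambda>i. if i < c1 then Suc (g1 i) else 0) = (c2, Suc d2, \<lambda>i. if i < c2 then Suc (g2 i) else 0)"
    using f(3) unfolding 1 2 shL_def triple_simps .
  then have e: "c1 = c2" "d1 = d2" by auto
  have e3: "(\<lambda>i. if i < c1 then Suc (g1 i) else 0) = (\<lambda>i. if i < c2 then Suc (g2 i) else 0)"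
    by (rule conjunct2[OF conjunct2[OF e0[unfolded prod.inject]]])
  have "g1 i = g2 i" for i
    using fun_cong[OF e3, of i] v e(1) unfolding valid_tr by (cases "i < c1") auto
  then show "f1 = f2" using 1 2 e by auto
qed

lemma shL_img: "shL ` PL = {m. valid_mor m} - PL"
proof
  show "shL ` PL \<subseteq> {m. valid_mor m} - PL"
  proof
    fix q assume "q \<in> shL ` PL"
    then obtain f where f: "f \<in> PL" "q = shL f" by blast
    obtain c d g where 1: "f = (c, d, g)" by (rule mor_cases)
    have v: "valid_mor (c, d, g)" and ev: "even (a0 f)" using f 1 by (auto simp: PL_def)
    have q: "q = (c, Suc d, \<lambda>i. if i < c then Suc (g i) else 0)" using f(2) unfolding 1 shL_def triple_simps .
    have "valid_mor q" using v unfolding q valid_tr by auto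
    moreover have "a0 q = Suc (a0 f)" unfolding q 1 a0_def by auto
    ultimately show "q \<in> {m. valid_mor m} - PL" using ev by (auto simp: PL_def)
  qed
  show "{m. valid_mor m} - PL \<subseteq> shL ` PL"
  proof
    fix q assume q: "q \<in> {m. valid_mor m} - PL"
    obtain c d g where 1: "q = (c, d, g)" by (rule mor_cases)
    have v: "valid_mor (c, d, g)" and od: "odd (a0 q)" using q 1 by (auto simp: PL_def)
    then have v': "(\<forall>r s. r < s \<and> s < c \<longrightarrow> g r < g s)" "(\<forall>i<c. g i < d)" "(\<forall>i\<ge>c. g i = 0)"
      unfolding valid_tr by auto
    define f where "f = (c, d - 1, \<lambda>i. if i < c then g i - 1 else 0)"
    have ge1: "g i \<ge> 1" if "i < c" for i
    proof -
      have "g 0 \<ge> 1" using od that unfolding 1 a0_def by (cases "g 0") auto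
      moreover have "g 0 \<le> g i" using v' that by (metis le_eq_less_or_eq neq0_conv)
      ultimately show ?thesis by simp
    qed
    have d1: "d \<ge> 1"
    proof (cases "c = 0")
      case True then show ?thesis using od unfolding 1 a0_def by (cases d) auto
    next
      case False then have "g 0 < d" using v' by auto
      then show ?thesis by simp
    qed
    have "valid_mor f" unfolding f_def valid_tr
    proof (intro conjI allI impI)
      fix r s assume rs: "r < s \<and> s < c"
      then have "g r < g s" using v' by blast
      then show "(if r < c then g r - 1 else 0) < (if s < c then g s - 1 else 0)"
        using rs ge1[of r] by auto
    next
      fix i assume "i < c"
      then show "(if i < c then g i - 1 else 0) < d - 1" using v' ge1[of i] by auto
    qed auto
    moreover have "even (a0 f)"
    proof (cases "c = 0")
      case True then show ?thesis using od unfolding 1 f_def a0_def by (cases d) auto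
    next
      case False then show ?thesis using od ge1[of 0] unfolding 1 f_def a0_def by (cases "g 0") auto
    qed
    moreover have "shL f = q"
    proof -
      have gi: "(if i < c then Suc (g i - 1) else 0) = g i" for i using ge1[of i] v' by auto
      have "(\<lambda>i. if i < c then Suc (if i < c then g i - 1 else 0) else 0) = g"
      proof
        fix i show "(if i < c then Suc (if i < c then g i - 1 else 0) else 0) = g i"
          using gi[of i] by (cases "i < c") auto
      qed
      then show ?thesis unfolding shL_def f_def 1 triple_simps using d1 by simp
    qed
    ultimately show "q \<in> shL ` PL" by (auto simp: PL_def)
  qed
qed




lemma mcomp_idm_left: "valid_mor f \<Longrightarrow> mcomp (idm (tgt f)) f = f"
  by (cases f) (auto simp: mcomp_def idm_def valid_tr fun_eq_iff)

lemma mcomp_idm_right: "valid_mor f \<Longrightarrow> mcomp f (idm (src f)) = f"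
  by (cases f) (auto simp: mcomp_def idm_def valid_tr fun_eq_iff)

lemma zero_in_image: "(\<lambda>_. 0::'k::field) \<in> ua_image"
  unfolding ua_image_def mem_Collect_eq by (rule exI[of _ "{}"]) simp

lemma mem_left:
  "(\<lambda>m. a * basis_el (idm y) m + b * ua_d y m) \<in> (ua_image :: (mor \<Rightarrow> 'k::field) set)"
proof -
  let ?S = "{(y, 0::nat), (y, Suc 0)}"
  let ?a = "\<lambda>p::nat \<times> nat. if snd p = 0 then a else b"
  have "(\<lambda>m. \<Sum>p\<in>?S. ?a p * (ua_path (fst p) (snd p) :: mor \<Rightarrow> 'k) m) = (\<lambda>m. a * basis_el (idm y) m + b * ua_d y m)"
    by (simp del: ua_path.simps add: ua_path1 ua_path.simps(1))
  then show ?thesis unfolding ua_image_def by (intro CollectI exI[of _ ?S] exI[of _ ?a]) simp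
qed

lemma supp_left:
  "a * basis_el (idm y) m + b * (ua_d y m :: 'k::field) \<noteq> 0 \<Longrightarrow> src m = y"
  by (cases "m = idm y"; cases "ua_d y m = (0::'k)") (auto simp: basis_el_def dest: ua_d_supp)

lemma left_free: "free_left_module (ua_image :: (mor \<Rightarrow> 'k::field) set) kDelta"
  unfolding free_left_module_def
proof (rule assembly[where act = conv and sg = tgt and sb = src and E = PL and P = PL and sh = shL
      and X = "\<lambda>f. ua_d (tgt f)" and w = "\<lambda>f. delta (tgt f) 0" and D = "\<lambda>f. conv (ua_d (tgt f)) (basis_el f)"])
  show "PL \<subseteq> PL" by simp
  show "PL \<subseteq> {m. valid_mor m}" by (auto simp: PL_def)
  show "inj_on shL PL" by (rule shL_inj)
  show "shL ` PL = {m. valid_mor m} - PL" by (rule shL_img)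
  show "\<forall>f\<in>PL. \<forall>q. q \<notin> PL \<longrightarrow> conv (ua_d (tgt f)) (basis_el f) q = (if q = shL f then 1 else (0::'k))"
    using left_tri by blast
  show "\<forall>f\<in>PL. finite {q. conv (ua_d (tgt f)) (basis_el f) q \<noteq> (0::'k)}"
    by (intro ballI finite_supp_conv finite_supp_ua_d finite_supp_basis)
  show "\<forall>f\<in>PL - PL. \<forall>m. (ua_d (tgt f) m :: 'k) = 0" by simp
  show "\<forall>g. conv (\<lambda>_. 0::'k) g = (\<lambda>_. 0)" by simp
  show "\<forall>f\<in>PL. \<forall>a b. conv (\<lambda>m. a * basis_el (idm (tgt f)) m + b * ua_d (tgt f) m) (basis_el f) =
      (\<lambda>m. a * basis_el f m + b * conv (ua_d (tgt f)) (basis_el f) (m::mor) :: 'k)"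
  proof (intro ballI allI)
    fix f a b assume f: "f \<in> PL"
    then have v: "valid_mor f" by (simp add: PL_def)
    have "conv (\<lambda>m. a * basis_el (idm (tgt f)) m + b * ua_d (tgt f) m) (basis_el f) =
      (\<lambda>h. a * conv (basis_el (idm (tgt f))) (basis_el f) h + b * conv (ua_d (tgt f)) (basis_el f) (h::mor) :: 'k)"
      by (rule conv_lin_left) auto
    also have "conv (basis_el (idm (tgt f))) (basis_el f) = (basis_el f :: mor \<Rightarrow> 'k)"
      unfolding conv_basis by (auto simp: mcomp_idm_left[OF v] basis_el_def fun_eq_iff)
    finally show "conv (\<lambda>m. a * basis_el (idm (tgt f)) m + b * ua_d (tgt f) m) (basis_el f) =
      (\<lambda>m. a * basis_el f m + b * conv (ua_d (tgt f)) (basis_el f) (m::mor) :: 'k)" .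
  qed
  show "\<forall>f\<in>PL. \<forall>\<beta>. \<beta> \<in> ua_image \<and> (\<forall>m. \<beta> m \<noteq> 0 \<longrightarrow> src m = tgt f) \<longrightarrow>
        \<beta> = (\<lambda>m. \<beta> (idm (tgt f)) * basis_el (idm (tgt f)) m + \<beta> (delta (tgt f) 0) * (ua_d (tgt f) m :: 'k))"
    using char_left by blast
  show "\<forall>f\<in>PL. \<forall>a b. (\<lambda>m. a * basis_el (idm (tgt f)) m + b * ua_d (tgt f) m) \<in> (ua_image :: (mor \<Rightarrow> 'k) set) \<and>
        (\<forall>m. a * basis_el (idm (tgt f)) m + b * (ua_d (tgt f) m :: 'k) \<noteq> 0 \<longrightarrow> src m = tgt f)"
    using mem_left supp_left by blast
  show "(\<lambda>_. 0::'k) \<in> (ua_image :: (mor \<Rightarrow> 'k) set)" by (rule zero_in_image)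
qed




definition PR :: "mor set" where "PR = {f. valid_mor f \<and> ((0 < src f \<and> fn f 0 = 0) \<or> tgt f = 0)}"
definition ER :: "mor set" where "ER = {f. valid_mor f \<and> 0 < src f \<and> fn f 0 = 0}"
definition shR :: "mor \<Rightarrow> mor" where "shR f = (src f - 1, tgt f, \<lambda>i. if i < src f - 1 then fn f (Suc i) else 0)"

lemma mcomp_delta_right:
  assumes "0 < c"
  shows "mcomp (c, d, g) (delta (c - 1) i) = (c - 1, d, \<lambda>j. if j < c - 1 then g (if j < i then j else Suc j) else 0)"
  using assms by (auto simp: mcomp_def delta_def fun_eq_iff)

lemma mcomp_delta_right_valid:
  assumes "valid_mor (c, d, g)" "0 < c"
  shows "valid_mor (mcomp (c, d, g) (delta (c - 1) i))"
  unfolding mcomp_delta_right[OF assms(2)] valid_tr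
proof (intro conjI allI impI)
  have v: "\<forall>r s. r < s \<and> s < c \<longrightarrow> g r < g s" "\<forall>i<c. g i < d" using assms(1) unfolding valid_tr by auto
  fix r s assume rs: "r < s \<and> s < c - 1"
  let ?r = "if r < i then r else Suc r" and ?s = "if s < i then s else Suc s"
  have "?r < ?s" "?s < c" using rs by auto
  then show "(if r < c - 1 then g ?r else 0) < (if s < c - 1 then g ?s else 0)" using v rs by auto
next
  have v: "\<forall>i<c. g i < d" using assms(1) unfolding valid_tr by auto
  fix j assume j: "j < c - 1"
  then have "(if j < i then j else Suc j) < c" by auto
  then show "(if j < c - 1 then g (if j < i then j else Suc j) else 0) < d" using v j by auto
qed auto

lemma right_tri_term:
  assumes "f \<in> ER" "q \<notin> PR" "i \<le> src f - 1"
  shows "(mcomp f (delta (src f - 1) i) = q) \<longleftrightarrow> (i = 0 \<and> q = shR f)"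
proof -
  obtain c d g where f: "f = (c, d, g)" by (rule mor_cases)
  have v: "valid_mor (c, d, g)" and c0: "0 < c" and g0: "g 0 = 0" using assms(1) f by (auto simp: ER_def)
  show ?thesis
  proof (cases "i = 0")
    case True
    have "mcomp f (delta (src f - 1) i) = shR f"
      unfolding f triple_simps mcomp_delta_right[OF c0] True shR_def by (auto simp: fun_eq_iff)
    then show ?thesis using True by auto
  next
    case False
    then have c1: "0 < c - 1" using assms(3) f by simp
    have "mcomp f (delta (src f - 1) i) \<in> PR"
      using mcomp_delta_right_valid[OF v c0, of i] c1 False g0
      unfolding PR_def f triple_simps mcomp_delta_right[OF c0] by simp
    then show ?thesis using False assms(2) by auto
  qed
qed

lemma Xr_pos: "0 < y \<Longrightarrow> Xr y = ua_d (y - 1)"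
  by (auto simp: Xr_def)

lemma right_tri:
  assumes "f \<in> ER" "q \<notin> PR"
  shows "conv (basis_el f) (Xr (src f)) q = (if q = shR f then 1 else (0::'k::field))"
proof -
  have c0: "0 < src f" using assms(1) by (simp add: ER_def)
  have "conv (basis_el f) (Xr (src f)) q = (\<Sum>i\<le>src f - 1. (-1::'k) ^ i * conv (basis_el f) (basis_el (delta (src f - 1) i)) q)"
    unfolding Xr_pos[OF c0] ua_d_sum by (subst conv_sum_right) auto
  also have "\<dots> = (\<Sum>i\<le>src f - 1. if i = 0 then (if q = shR f then 1 else 0) else 0)"
  proof (rule sum.cong)
    fix i assume "i \<in> {..src f - 1}"
    then have iff: "(mcomp f (delta (src f - 1) i) = q) \<longleftrightarrow> (i = 0 \<and> q = shR f)"
      using right_tri_term[OF assms] by simp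
    show "(-1::'k) ^ i * conv (basis_el f) (basis_el (delta (src f - 1) i)) q = (if i = 0 then (if q = shR f then 1 else 0) else 0)"
      unfolding conv_basis using iff c0 by auto
  qed simp
  also have "\<dots> = (if q = shR f then 1 else 0)" by simp
  finally show ?thesis .
qed


lemma shR_inj: "inj_on shR ER"
proof
  fix f1 f2 assume f: "f1 \<in> ER" "f2 \<in> ER" "shR f1 = shR f2"
  obtain c1 d1 g1 where 1: "f1 = (c1, d1, g1)" by (rule mor_cases)
  obtain c2 d2 g2 where 2: "f2 = (c2, d2, g2)" by (rule mor_cases)
  have v: "valid_mor (c1, d1, g1)" "valid_mor (c2, d2, g2)" "0 < c1" "0 < c2" "g1 0 = 0" "g2 0 = 0"
    using f 1 2 by (auto simp: ER_def)
  have e0: "(c1 - 1, d1, \<lambda>i. if i < c1 - 1 then g1 (Suc i) else 0) = (c2 - 1, d2, \<lambda>i. if i < c2 - 1 then g2 (Suc i) else 0)"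
    using f(3) unfolding 1 2 shR_def triple_simps .
  then have e: "c1 = c2" "d1 = d2" using v by auto
  have e3: "(\<lambda>i. if i < c1 - 1 then g1 (Suc i) else 0) = (\<lambda>i. if i < c2 - 1 then g2 (Suc i) else 0)"
    by (rule conjunct2[OF conjunct2[OF e0[unfolded prod.inject]]])
  have "g1 i = g2 i" for i
  proof (cases i)
    case 0 then show ?thesis using v by simp
  next
    case (Suc j)
    show ?thesis
    proof (cases "j < c1 - 1")
      case True then show ?thesis using fun_cong[OF e3, of j] e Suc by simp
    next
      case False
      then have "i \<ge> c1" "i \<ge> c2" using Suc e v by auto
      then show ?thesis using v(1,2) unfolding valid_tr by auto
    qed
  qed
  then show "f1 = f2" using 1 2 e by auto
qed

lemma shR_img: "shR ` ER = {m. valid_mor m} - PR"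
proof
  show "shR ` ER \<subseteq> {m. valid_mor m} - PR"
  proof
    fix q assume "q \<in> shR ` ER"
    then obtain f where f: "f \<in> ER" "q = shR f" by blast
    obtain c d g where 1: "f = (c, d, g)" by (rule mor_cases)
    have v: "valid_mor (c, d, g)" and c0: "0 < c" and g0: "g 0 = 0" using f 1 by (auto simp: ER_def)
    have v': "\<forall>r s. r < s \<and> s < c \<longrightarrow> g r < g s" "\<forall>i<c. g i < d" "\<forall>i\<ge>c. g i = 0"
      using v unfolding valid_tr by auto
    have q: "q = (c - 1, d, \<lambda>i. if i < c - 1 then g (Suc i) else 0)" using f(2) unfolding 1 shR_def triple_simps .
    have "valid_mor q" unfolding q valid_tr
    proof (intro conjI allI impI)
      fix r s assume rs: "r < s \<and> s < c - 1"
      then have "g (Suc r) < g (Suc s)" using v' by auto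
      then show "(if r < c - 1 then g (Suc r) else 0) < (if s < c - 1 then g (Suc s) else 0)" using rs by auto
    next
      fix i assume "i < c - 1"
      then show "(if i < c - 1 then g (Suc i) else 0) < d" using v' by auto
    qed auto
    moreover have "d > 0" using v' c0 by (metis gr_zeroI not_less0)
    moreover have "g 1 > 0" if "0 < c - 1" 
    proof -
      have "1 < c" using that by simp
      then have "g 0 < g 1" using v' by blast
      then show ?thesis using g0 by simp
    qed
    ultimately show "q \<in> {m. valid_mor m} - PR" unfolding q PR_def by auto
  qed
  show "{m. valid_mor m} - PR \<subseteq> shR ` ER"
  proof
    fix q assume q: "q \<in> {m. valid_mor m} - PR"
    obtain c d g where 1: "q = (c, d, g)" by (rule mor_cases)
    have v: "valid_mor (c, d, g)" and d0: "d \<noteq> 0" and n: "\<not> (0 < c \<and> g 0 = 0)" using q 1 by (auto simp: PR_def)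
    have v': "\<forall>r s. r < s \<and> s < c \<longrightarrow> g r < g s" "\<forall>i<c. g i < d" "\<forall>i\<ge>c. g i = 0"
      using v unfolding valid_tr by auto
    have pos: "g i > 0" if "i < c" for i
    proof -
      have "g 0 > 0" using n that by auto
      moreover have "g 0 \<le> g i" using v' that by (metis le_eq_less_or_eq neq0_conv)
      ultimately show ?thesis by simp
    qed
    define f where "f = (Suc c, d, \<lambda>i. if i = 0 then 0 else if i < Suc c then g (i - 1) else 0)"
    have "valid_mor f" unfolding f_def valid_tr
    proof (intro conjI allI impI)
      fix r s assume rs: "r < s \<and> s < Suc c"
      show "(if r = 0 then 0 else if r < Suc c then g (r - 1) else 0) < (if s = 0 then 0 else if s < Suc c then g (s - 1) else 0)"
      proof (cases "r = 0")
        case True then show ?thesis using rs pos[of "s - 1"] by auto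
      next
        case False
        then have "r - 1 < s - 1 \<and> s - 1 < c" using rs by auto
        then have "g (r - 1) < g (s - 1)" using v' by blast
        then show ?thesis using rs False by auto
      qed
    next
      fix i assume "i < Suc c"
      then show "(if i = 0 then 0 else if i < Suc c then g (i - 1) else 0) < d" using v' d0 by auto
    qed auto
    moreover have "f \<in> ER \<Longrightarrow> shR f = q"
    proof -
      have "(\<lambda>i. if i < c then (if Suc i = 0 then 0 else if Suc i < Suc c then g (Suc i - 1) else 0) else 0) = g"
      proof
        fix i show "(if i < c then (if Suc i = 0 then 0 else if Suc i < Suc c then g (Suc i - 1) else 0) else 0) = g i"
          using v' by (cases "i < c") auto
      qed
      then show ?thesis unfolding shR_def f_def 1 triple_simps by simp
    qed
    ultimately show "q \<in> shR ` ER" unfolding ER_def f_def by auto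
  qed
qed


lemma finite_supp_Xr[simp]: "finite {m. (Xr y m :: 'k::field) \<noteq> 0}"
  by (cases "y = 0") (simp_all add: Xr_def)

lemma mem_right:
  "(\<lambda>m. a * basis_el (idm y) m + b * Xr y m) \<in> (ua_image :: (mor \<Rightarrow> 'k::field) set)"
proof (cases "y = 0")
  case True
  have "(\<lambda>m. \<Sum>p\<in>{(0::nat, 0::nat)}. (\<lambda>_. a) p * (ua_path (fst p) (snd p) :: mor \<Rightarrow> 'k) m) = (\<lambda>m. a * basis_el (idm y) m + b * Xr y m)"
    using True by (simp add: Xr_def)
  then show ?thesis unfolding ua_image_def by (intro CollectI exI[of _ "{(0::nat, 0::nat)}"] exI[of _ "\<lambda>_. a"]) simp
next
  case False
  let ?S = "{(y, 0::nat), (y - 1, Suc 0)}"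
  let ?a = "\<lambda>p::nat \<times> nat. if snd p = 0 then a else b"
  have "(\<lambda>m. \<Sum>p\<in>?S. ?a p * (ua_path (fst p) (snd p) :: mor \<Rightarrow> 'k) m) = (\<lambda>m. a * basis_el (idm y) m + b * Xr y m)"
    using False by (simp del: ua_path.simps add: ua_path1 ua_path.simps(1) Xr_def)
  then show ?thesis unfolding ua_image_def by (intro CollectI exI[of _ ?S] exI[of _ ?a]) simp
qed

lemma supp_right:
  "a * basis_el (idm y) m + b * (Xr y m :: 'k::field) \<noteq> 0 \<Longrightarrow> tgt m = y"
proof (cases "m = idm y")
  case False
  assume h: "a * basis_el (idm y) m + b * (Xr y m :: 'k::field) \<noteq> 0"
  then have "Xr y m \<noteq> (0::'k)" using False by (auto simp: basis_el_def)
  then have "0 < y" "ua_d (y - 1) m \<noteq> (0::'k)" by (auto simp: Xr_def split: if_splits)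
  then show ?thesis using ua_d_supp[of "y - 1" m] by auto
qed simp

lemma right_free: "free_right_module (ua_image :: (mor \<Rightarrow> 'k::field) set) kDelta"
  unfolding free_right_module_def
proof (rule assembly[where act = "\<lambda>\<beta> g. conv g \<beta>" and sg = src and sb = tgt and E = ER and P = PR and sh = shR
      and X = "\<lambda>f. Xr (src f)" and w = "\<lambda>f. delta (src f - 1) 0" and D = "\<lambda>f. conv (basis_el f) (Xr (src f))"])
  show "ER \<subseteq> PR" by (auto simp: ER_def PR_def)
  show "PR \<subseteq> {m. valid_mor m}" by (auto simp: PR_def)
  show "inj_on shR ER" by (rule shR_inj)
  show "shR ` ER = {m. valid_mor m} - PR" by (rule shR_img)
  show "\<forall>f\<in>ER. \<forall>q. q \<notin> PR \<longrightarrow> conv (basis_el f) (Xr (src f)) q = (if q = shR f then 1 else (0::'k))"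
    using right_tri by blast
  show "\<forall>f\<in>ER. finite {q. conv (basis_el f) (Xr (src f)) q \<noteq> (0::'k)}"
    by (intro ballI finite_supp_conv finite_supp_Xr finite_supp_basis)
  show "\<forall>f\<in>PR - ER. \<forall>m. (Xr (src f) m :: 'k) = 0"
  proof (intro ballI allI)
    fix f m assume f: "f \<in> PR - ER"
    have "src f = 0"
    proof (rule ccontr)
      assume "src f \<noteq> 0"
      then have "fn f 0 < tgt f" using f unfolding PR_def valid_mor_def by auto
      then show False using f \<open>src f \<noteq> 0\<close> by (auto simp: PR_def ER_def)
    qed
    then show "(Xr (src f) m :: 'k) = 0" by (simp add: Xr_def)
  qed
  show "\<forall>g. conv g (\<lambda>_. 0::'k) = (\<lambda>_. 0)" by simp
  show "\<forall>f\<in>PR. \<forall>a b. conv (basis_el f) (\<lambda>m. a * basis_el (idm (src f)) m + b * Xr (src f) m) =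
      (\<lambda>m. a * basis_el f m + b * conv (basis_el f) (Xr (src f)) (m::mor) :: 'k)"
  proof (intro ballI allI)
    fix f a b assume f: "f \<in> PR"
    then have v: "valid_mor f" by (simp add: PR_def)
    have "conv (basis_el f) (\<lambda>m. a * basis_el (idm (src f)) m + b * Xr (src f) m) =
      (\<lambda>h. a * conv (basis_el f) (basis_el (idm (src f))) h + b * conv (basis_el f) (Xr (src f)) (h::mor) :: 'k)"
      by (rule conv_lin_right) auto
    also have "conv (basis_el f) (basis_el (idm (src f))) = (basis_el f :: mor \<Rightarrow> 'k)"
      unfolding conv_basis by (auto simp: mcomp_idm_right[OF v] basis_el_def fun_eq_iff)
    finally show "conv (basis_el f) (\<lambda>m. a * basis_el (idm (src f)) m + b * Xr (src f) m) =
      (\<lambda>m. a * basis_el f m + b * conv (basis_el f) (Xr (src f)) (m::mor) :: 'k)" .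
  qed
  show "\<forall>f\<in>PR. \<forall>\<beta>. \<beta> \<in> ua_image \<and> (\<forall>m. \<beta> m \<noteq> 0 \<longrightarrow> tgt m = src f) \<longrightarrow>
        \<beta> = (\<lambda>m. \<beta> (idm (src f)) * basis_el (idm (src f)) m + \<beta> (delta (src f - 1) 0) * (Xr (src f) m :: 'k))"
    using char_right by blast
  show "\<forall>f\<in>PR. \<forall>a b. (\<lambda>m. a * basis_el (idm (src f)) m + b * Xr (src f) m) \<in> (ua_image :: (mor \<Rightarrow> 'k) set) \<and>
        (\<forall>m. a * basis_el (idm (src f)) m + b * (Xr (src f) m :: 'k) \<noteq> 0 \<longrightarrow> tgt m = src f)"
    using mem_right supp_right by blast
  show "(\<lambda>_. 0::'k) \<in> (ua_image :: (mor \<Rightarrow> 'k) set)" by (rule zero_in_image)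
qed

theorem lemma2p2:
  shows "free_left_module (ua_image :: (mor \<Rightarrow> 'k::field) set) kDelta
       \<and> free_right_module (ua_image :: (mor \<Rightarrow> 'k::field) set) kDelta"
  using left_free right_free by blast


end
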